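(* If all entries $p_{i,n}$ of $P$ are positive, then $F$ is a bijection of $[0,1]$ onto $[0,1]$.
   Context: Let $(m_n)_{n\ge1}$ be finite nonnegative integers and $\tilde Q=\|q_{i,n}\|$ ($i\in\{0,\dots,m_n\}$) with $q_{i,n}>0$, $\sum_{i}q_{i,n}=1$ for all $n$, and $\prod_n q_{i_n,n}=0$ for every digit sequence $(i_n)$. Put $a_{0,n}=0$, $a_{i,n}=\sum_{l<i}q_{l,n}$; $\Delta^{\tilde Q}_{j_1j_2\dots}=a_{j_1,1}+\sum_{n\ge2}a_{j_n,n}\prod_{l<n}q_{j_l,l}$. The nega-$\tilde Q$-representation $x=\Delta^{-\tilde Q}_{i_1i_2\dots}$ means $x=\Delta^{\tilde Q}_{i_1[m_2-i_2]i_3[m_4-i_4]\dots}$; every $x\in[0,1]$ has one. Let $P=\|p_{i,n}\|$ have the same shape with $p_{i,n}\in(-1,1)$, $\sum_ip_{i,n}=1$, $\prod_n|p_{i_n,n}|=0$ for every digit sequence, $0<\sum_{i<c}p_{i,n}<1$ for $c\in\{1,\dots,m_n\}$. Put $\beta_{0,n}=0$, $\beta_{c,n}=\sum_{i<c}p_{i,n}$; for odd $n$: $\tilde p_{i,n}=p_{i,n}$, $\tilde\beta_{i,n}=\beta_{i,n}$; for even $n$: $\tilde p_{i,n}=p_{m_n-i,n}$, $\tilde\beta_{i,n}=\beta_{m_n-i,n}$. $F(x)=\beta_{i_1,1}+\sum_{k\ge2}\tilde\beta_{i_k,k}\prod_{j<k}\tilde p_{i_j,j}$ for $x=\Delta^{-\tilde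 Q}_{i_1i_2\dots}$ (independent of the representation). *)

theory Defs
  imports Complex_Main
begin

text \<open>Matrices are functions \<open>q i n\<close> (digit i, position n), positions n \<ge> 1,
  digits i \<in> {0..m n}.\<close>

definition digit_seq :: "(nat \<Rightarrow> nat) \<Rightarrow> (nat \<Rightarrow> nat) \<Rightarrow> bool" where
  "digit_seq m d \<longleftrightarrow> (\<forall>n\<ge>1. d n \<le> m n)"

definition Q_matrix :: "(nat \<Rightarrow> nat) \<Rightarrow> (nat \<Rightarrow> nat \<Rightarrow> real) \<Rightarrow> bool" where
  "Q_matrix m q \<longleftrightarrow>
     (\<forall>n\<ge>1. (\<forall>i\<le>m n. q i n > 0) \<and> (\<Sum>i\<le>m n. q i n) = 1) \<and>
     (\<forall>d. digit_seq m d \<longrightarrow> (\<lambda>N. \<Prod>n\<in>{1..N}. q (d n) n) \<longlonglongrightarrow> 0)"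

definition P_matrix :: "(nat \<Rightarrow> nat) \<Rightarrow> (nat \<Rightarrow> nat \<Rightarrow> real) \<Rightarrow> bool" where
  "P_matrix m p \<longleftrightarrow>
     (\<forall>n\<ge>1. (\<forall>i\<le>m n. -1 < p i n \<and> p i n < 1) \<and> (\<Sum>i\<le>m n. p i n) = 1 \<and>
        (\<forall>c\<in>{1..m n}. 0 < (\<Sum>i<c. p i n) \<and> (\<Sum>i<c. p i n) < 1)) \<and>
     (\<forall>d. digit_seq m d \<longrightarrow> (\<lambda>N. \<Prod>n\<in>{1..N}. \<bar>p (d n) n\<bar>) \<longlonglongrightarrow> 0)"

definition acc :: "(nat \<Rightarrow> nat \<Rightarrow> real) \<Rightarrow> nat \<Rightarrow> nat \<Rightarrow> real" where
  "acc q i n = (\<Sum>l<i. q l n)"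

definition DeltaQ :: "(nat \<Rightarrow> nat \<Rightarrow> real) \<Rightarrow> (nat \<Rightarrow> nat) \<Rightarrow> real" where
  "DeltaQ q d = acc q (d 1) 1 +
     (\<Sum>k. acc q (d (k+2)) (k+2) * (\<Prod>l\<in>{1..k+1}. q (d l) l))"

text \<open>nega-representation: \<open>\<Delta>^{-Q}_{i_1 i_2 \<dots>} = \<Delta>^Q_{i_1 [m_2-i_2] i_3 \<dots>}\<close>\<close>
definition nega_digits :: "(nat \<Rightarrow> nat) \<Rightarrow> (nat \<Rightarrow> nat) \<Rightarrow> nat \<Rightarrow> nat" where
  "nega_digits m d n = (if even n then m n - d n else d n)"

definition NegaDelta :: "(nat \<Rightarrow> nat) \<Rightarrow> (nat \<Rightarrow> nat \<Rightarrow> real) \<Rightarrow> (nat \<Rightarrow> nat) \<Rightarrow> real" where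
  "NegaDelta m q d = DeltaQ q (nega_digits m d)"

definition p_tilde :: "(nat \<Rightarrow> nat) \<Rightarrow> (nat \<Rightarrow> nat \<Rightarrow> real) \<Rightarrow> nat \<Rightarrow> nat \<Rightarrow> real" where
  "p_tilde m p i n = (if odd n then p i n else p (m n - i) n)"

definition beta_tilde :: "(nat \<Rightarrow> nat) \<Rightarrow> (nat \<Rightarrow> nat \<Rightarrow> real) \<Rightarrow> nat \<Rightarrow> nat \<Rightarrow> real" where
  "beta_tilde m p i n = (if odd n then acc p i n else acc p (m n - i) n)"

definition F_value :: "(nat \<Rightarrow> nat) \<Rightarrow> (nat \<Rightarrow> nat \<Rightarrow> real) \<Rightarrow> (nat \<Rightarrow> nat) \<Rightarrow> real" where
  "F_value m p d = acc p (d 1) 1 +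
     (\<Sum>k. beta_tilde m p (d (k+2)) (k+2) * (\<Prod>j\<in>{1..k+1}. p_tilde m p (d j) j))"

text \<open>\<open>F(x)\<close> computed from a nega-Q representation of x (independent of the choice).\<close>
definition F_fun :: "(nat \<Rightarrow> nat) \<Rightarrow> (nat \<Rightarrow> nat \<Rightarrow> real) \<Rightarrow> (nat \<Rightarrow> nat \<Rightarrow> real) \<Rightarrow> real \<Rightarrow> real" where
  "F_fun m q p x = (SOME y. \<exists>d. digit_seq m d \<and> x = NegaDelta m q d \<and> y = F_value m p d)"

end

theory Submission imports Defs begin

definition good :: "(nat \<Rightarrow> nat) \<Rightarrow> (nat \<Rightarrow> nat \<Rightarrow> real) \<Rightarrow> bool" where
  "good m q \<longleftrightarrow>
     (\<forall>n\<ge>1. (\<forall>i\<le>m n. q i n > 0) \<and> (\<Sum>i\<le>m n. q i n) = 1) \<and>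
     (\<forall>d. digit_seq m d \<longrightarrow> (\<lambda>N. \<Prod>n\<in>{1..N}. q (d n) n) \<longlonglongrightarrow> 0)"

definition pi :: "(nat \<Rightarrow> nat \<Rightarrow> real) \<Rightarrow> (nat \<Rightarrow> nat) \<Rightarrow> nat \<Rightarrow> real" where
  "pi q d N = (\<Prod>l\<in>{1..N}. q (d l) l)"
definition tt :: "(nat \<Rightarrow> nat \<Rightarrow> real) \<Rightarrow> (nat \<Rightarrow> nat) \<Rightarrow> nat \<Rightarrow> real" where
  "tt q d n = acc q (d (Suc n)) (Suc n) * pi q d n"
definition SS :: "(nat \<Rightarrow> nat \<Rightarrow> real) \<Rightarrow> (nat \<Rightarrow> nat) \<Rightarrow> nat \<Rightarrow> real" where
  "SS q d N = (\<Sum>n<N. tt q d n)"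
definition UU :: "(nat \<Rightarrow> nat \<Rightarrow> real) \<Rightarrow> (nat \<Rightarrow> nat) \<Rightarrow> nat \<Rightarrow> real" where
  "UU q d N = SS q d N + pi q d N"

lemma acc_Suc: "acc q (Suc i) n = acc q i n + q i n"
  by (simp add: acc_def)

lemma acc_0[simp]: "acc q 0 n = 0" by (simp add: acc_def)

lemma good_pos: "good m q \<Longrightarrow> n \<ge> 1 \<Longrightarrow> i \<le> m n \<Longrightarrow> q i n > 0"
  by (simp add: good_def)

lemma acc_strict: assumes "good m q" "n \<ge> 1"
  shows "i < j \<Longrightarrow> j \<le> Suc (m n) \<Longrightarrow> acc q i n < acc q j n"
proof (induction j)
  case 0 then show ?case by simp
next
  case (Suc j)
  have "q j n > 0" using good_pos[OF assms] Suc by simp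
  then show ?case using Suc by (cases "i = j") (auto simp: acc_Suc)
qed

lemma acc_mono: assumes "good m q" "n \<ge> 1" "i \<le> j" "j \<le> Suc (m n)"
  shows "acc q i n \<le> acc q j n"
  using acc_strict[OF assms(1,2), of i j] assms by (cases "i = j") auto

lemma acc_top: assumes "good m q" "n \<ge> 1" shows "acc q (Suc (m n)) n = 1"
  using assms by (simp add: acc_def good_def lessThan_Suc_atMost)

lemma acc_nonneg: assumes "good m q" "n \<ge> 1" "i \<le> Suc (m n)" shows "0 \<le> acc q i n"
  using acc_mono[OF assms(1,2), of 0 i] assms by simp

lemma acc_le1: assumes "good m q" "n \<ge> 1" "i \<le> Suc (m n)" shows "acc q i n \<le> 1"
  using acc_mono[OF assms(1,2), of i "Suc (m n)"] acc_top[OF assms(1,2)] assms by simp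

lemma acc_eq_iff: assumes "good m q" "n \<ge> 1" "i \<le> Suc (m n)" "j \<le> Suc (m n)"
  shows "acc q i n = acc q j n \<longleftrightarrow> i = j"
  using acc_strict[OF assms(1,2), of i j] acc_strict[OF assms(1,2), of j i] assms
  by (metis less_irrefl linorder_neqE_nat)

lemma pi_pos: assumes "good m q" "digit_seq m d" shows "pi q d N > 0"
  unfolding pi_def using assms by (auto intro!: prod_pos good_pos simp: digit_seq_def)

lemma pi_Suc: "pi q d (Suc N) = pi q d N * q (d (Suc N)) (Suc N)"
  unfolding pi_def by (simp add: atLeastAtMostSuc_conv mult.commute)

lemma pi_0[simp]: "pi q d 0 = 1" by (simp add: pi_def)

lemma pi_lim: assumes "good m q" "digit_seq m d" shows "pi q d \<longlonglongrightarrow> 0"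
  using assms unfolding good_def pi_def by blast

lemma tt_nonneg: assumes "good m q" "digit_seq m d" shows "0 \<le> tt q d n"
proof -
  have "d (Suc n) \<le> Suc (m (Suc n))" using assms(2) unfolding digit_seq_def
    by (metis le_SucI le_add1 plus_1_eq_Suc)
  then show ?thesis unfolding tt_def using pi_pos[OF assms, of n] acc_nonneg[OF assms(1), of "Suc n" "d (Suc n)"]
    by simp
qed

lemma UU_Suc: "UU q d (Suc N) = SS q d N + pi q d N * acc q (Suc (d (Suc N))) (Suc N)"
  by (simp add: UU_def SS_def tt_def pi_Suc acc_Suc algebra_simps)

lemma UU_dec: assumes "good m q" "digit_seq m d" shows "UU q d (Suc N) \<le> UU q d N"
proof -
  have "acc q (Suc (d (Suc N))) (Suc N) \<le> 1"
    using acc_le1[OF assms(1), of "Suc N"] assms(2) by (auto simp: digit_seq_def)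
  then show ?thesis using UU_Suc[of q d N] pi_pos[OF assms, of N]
    by (simp add: UU_def mult_left_le)
qed

lemma UU_0[simp]: "UU q d 0 = 1" by (simp add: UU_def SS_def)

lemma UU_le1: assumes "good m q" "digit_seq m d" shows "UU q d N \<le> 1"
proof (induction N)
  case (Suc N) then show ?case using UU_dec[OF assms, of N] by simp
qed simp

lemma tt_summable: assumes "good m q" "digit_seq m d" shows "summable (tt q d)"
proof (rule bounded_imp_summable[where B=1])
  fix n show "0 \<le> tt q d n" by (rule tt_nonneg[OF assms])
  have "(\<Sum>k\<le>n. tt q d k) = SS q d (Suc n)" by (simp add: SS_def lessThan_Suc_atMost)
  also have "\<dots> \<le> UU q d (Suc n)" using pi_pos[OF assms, of "Suc n"] by (simp add: UU_def)
  also have "\<dots> \<le> 1" by (rule UU_le1[OF assms])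
  finally show "(\<Sum>k\<le>n. tt q d k) \<le> 1" .
qed

lemma DeltaQ_eq: assumes "good m q" "digit_seq m d" shows "DeltaQ q d = suminf (tt q d)"
proof -
  have "(\<Sum>k. tt q d (Suc k)) = suminf (tt q d) - tt q d 0"
    by (rule suminf_split_head[OF tt_summable[OF assms]])
  moreover have "tt q d 0 = acc q (d 1) 1" by (simp add: tt_def)
  moreover have "(\<lambda>k. tt q d (Suc k)) = (\<lambda>k. acc q (d (k+2)) (k+2) * (\<Prod>l\<in>{1..k+1}. q (d l) l))"
    by (simp add: tt_def pi_def)
  ultimately show ?thesis by (simp add: DeltaQ_def)
qed

lemma SS_lim: assumes "good m q" "digit_seq m d" shows "SS q d \<longlonglongrightarrow> DeltaQ q d"
  unfolding DeltaQ_eq[OF assms] SS_def[abs_def]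
  by (rule summable_LIMSEQ[OF tt_summable[OF assms]])

lemma UU_lim: assumes "good m q" "digit_seq m d" shows "UU q d \<longlonglongrightarrow> DeltaQ q d"
  unfolding UU_def[abs_def] using tendsto_add[OF SS_lim[OF assms] pi_lim[OF assms]] by simp

lemma SS_le: assumes "good m q" "digit_seq m d" shows "SS q d N \<le> DeltaQ q d"
  unfolding DeltaQ_eq[OF assms] SS_def
  by (rule sum_le_suminf[OF tt_summable[OF assms]]) (auto intro: tt_nonneg[OF assms])

lemma le_UU: assumes "good m q" "digit_seq m d" shows "DeltaQ q d \<le> UU q d N"
  proof -
  have "decseq (UU q d)" by (rule decseq_SucI) (rule UU_dec[OF assms])
  then show ?thesis using decseq_ge UU_lim[OF assms] by blast
qed

lemma Delta_01: assumes "good m q" "digit_seq m d" shows "0 \<le> DeltaQ q d" "DeltaQ q d \<le> 1"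
  using SS_le[OF assms, of 0] le_UU[OF assms, of 0] by (auto simp: SS_def)

lemma tt_zero_iff: assumes "good m q" "digit_seq m d"
  shows "tt q d n = 0 \<longleftrightarrow> d (Suc n) = 0"
proof -
  have dle: "d (Suc n) \<le> Suc (m (Suc n))" using assms(2) unfolding digit_seq_def
    by (metis le_SucI le_add1 plus_1_eq_Suc)
  have "tt q d n = 0 \<longleftrightarrow> acc q (d (Suc n)) (Suc n) = acc q 0 (Suc n)"
    using pi_pos[OF assms, of n] by (simp add: tt_def)
  also have "\<dots> \<longleftrightarrow> d (Suc n) = 0" using acc_eq_iff[OF assms(1), of "Suc n" "d (Suc n)" 0] dle by simp
  finally show ?thesis .
qed

lemma shift_all: "(\<forall>j. P (Suc (j + k))) \<longleftrightarrow> (\<forall>n>k. P n)"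
proof
  assume "\<forall>j. P (Suc (j + k))"
  then show "\<forall>n>k. P n" by (metis add.commute less_iff_Suc_add)
qed auto

lemma Delta_eq_SS: assumes "good m q" "digit_seq m d"
  shows "DeltaQ q d = SS q d k \<longleftrightarrow> (\<forall>n>k. d n = 0)"
proof -
  have sm: "summable (tt q d)" by (rule tt_summable[OF assms])
  have e: "DeltaQ q d = (\<Sum>j. tt q d (j + k)) + SS q d k"
    unfolding DeltaQ_eq[OF assms] SS_def using suminf_split_initial_segment[OF sm] by blast
  have "(\<Sum>j. tt q d (j + k)) = 0 \<longleftrightarrow> (\<forall>j. tt q d (j + k) = 0)"
    by (rule suminf_eq_zero_iff) (auto simp: summable_iff_shift sm tt_nonneg[OF assms])
  also have "\<dots> \<longleftrightarrow> (\<forall>j. d (Suc (j + k)) = 0)" using tt_zero_iff[OF assms] by simp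
  also have "\<dots> \<longleftrightarrow> (\<forall>n>k. d n = 0)" by (rule shift_all)
  finally show ?thesis using e by simp
qed

lemma Delta_eq_UU: assumes "good m q" "digit_seq m d"
  shows "DeltaQ q d = UU q d k \<longleftrightarrow> (\<forall>n>k. d n = m n)"
proof -
  define g where "g j = UU q d (j + k) - UU q d (Suc (j + k))" for j
  have lim: "(\<lambda>j. UU q d (j + k)) \<longlonglongrightarrow> DeltaQ q d"
    by (rule LIMSEQ_ignore_initial_segment[OF UU_lim[OF assms]])
  have s: "g sums (UU q d k - DeltaQ q d)"
    using telescope_sums'[OF lim] unfolding g_def[abs_def] by simp
  have gform: "g j = pi q d (j + k) * (1 - acc q (Suc (d (Suc (j + k)))) (Suc (j + k)))" for j
    unfolding g_def UU_Suc by (simp add: UU_def algebra_simps)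
  have dle: "d n \<le> m n" if "n \<ge> 1" for n using assms(2) that unfolding digit_seq_def by blast
  have g0: "g j = 0 \<longleftrightarrow> d (Suc (j + k)) = m (Suc (j + k))" for j
  proof -
    let ?n = "Suc (j + k)"
    have "g j = 0 \<longleftrightarrow> acc q (Suc (d ?n)) ?n = acc q (Suc (m ?n)) ?n"
      using pi_pos[OF assms, of "j + k"] acc_top[OF assms(1), of ?n] gform[of j] by auto
    also have "\<dots> \<longleftrightarrow> d ?n = m ?n" using acc_eq_iff[OF assms(1), of ?n "Suc (d ?n)" "Suc (m ?n)"] dle[of ?n]
      by simp
    finally show ?thesis .
  qed
  have gnn: "0 \<le> g j" for j
  proof -
    let ?n = "Suc (j + k)"
    have "acc q (Suc (d ?n)) ?n \<le> 1" using acc_le1[OF assms(1), of ?n "Suc (d ?n)"] dle[of ?n] by simp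
    then show ?thesis using gform[of j] pi_pos[OF assms, of "j + k"] by simp
  qed
  have "UU q d k - DeltaQ q d = 0 \<longleftrightarrow> (\<forall>j. g j = 0)"
    using suminf_eq_zero_iff[OF sums_summable[OF s] gnn] sums_unique[OF s] by simp
  also have "\<dots> \<longleftrightarrow> (\<forall>n>k. d n = m n)" using g0 shift_all[of "\<lambda>n. d n = m n" k] by simp
  finally show ?thesis by (metis eq_iff_diff_eq_0)
qed

lemma pi_cong: "(\<And>l. 1 \<le> l \<Longrightarrow> l \<le> N \<Longrightarrow> e l = e' l) \<Longrightarrow> pi q e N = pi q e' N"
  unfolding pi_def by (rule prod.cong) auto

lemma SS_cong: "(\<And>l. 1 \<le> l \<Longrightarrow> l \<le> N \<Longrightarrow> e l = e' l) \<Longrightarrow> SS q e N = SS q e' N"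
  unfolding SS_def tt_def
  by (rule sum.cong) (auto intro!: pi_cong)

lemma compare:
  assumes g: "good m q" and de: "digit_seq m e" and de': "digit_seq m e'"
    and agree: "\<And>n. 1 \<le> n \<Longrightarrow> n \<le> j \<Longrightarrow> e n = e' n"
    and lt: "e (Suc j) < e' (Suc j)"
  shows "DeltaQ q e \<le> DeltaQ q e'"
    "DeltaQ q e = DeltaQ q e' \<longleftrightarrow> e' (Suc j) = Suc (e (Suc j)) \<and> (\<forall>n>Suc j. e n = m n) \<and> (\<forall>n>Suc j. e' n = 0)"
proof -
  let ?k = "Suc j"
  have pe: "pi q e j = pi q e' j" by (rule pi_cong) (rule agree)
  have se: "SS q e j = SS q e' j" by (rule SS_cong) (rule agree)
  have A: "UU q e ?k = SS q e j + pi q e j * acc q (Suc (e ?k)) ?k" by (rule UU_Suc)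
  have B: "SS q e' ?k = SS q e' j + pi q e' j * acc q (e' ?k) ?k" by (simp add: SS_def tt_def)
  have e'le: "e' ?k \<le> m ?k" using de' unfolding digit_seq_def by simp
  have accle: "acc q (Suc (e ?k)) ?k \<le> acc q (e' ?k) ?k"
    by (rule acc_mono[OF g]) (use lt e'le in auto)
  have acceq: "acc q (Suc (e ?k)) ?k = acc q (e' ?k) ?k \<longleftrightarrow> e' ?k = Suc (e ?k)"
    using acc_eq_iff[OF g, of ?k "Suc (e ?k)" "e' ?k"] lt e'le by auto
  have pp: "pi q e j > 0" by (rule pi_pos[OF g de])
  have mid: "UU q e ?k \<le> SS q e' ?k" using A B pe se accle pp by (simp add: mult_left_mono)
  have mideq: "UU q e ?k = SS q e' ?k \<longleftrightarrow> e' ?k = Suc (e ?k)"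
    using A B pe se pp acceq by auto
  have l1: "DeltaQ q e \<le> UU q e ?k" by (rule le_UU[OF g de])
  have l3: "SS q e' ?k \<le> DeltaQ q e'" by (rule SS_le[OF g de'])
  show "DeltaQ q e \<le> DeltaQ q e'" using l1 mid l3 by linarith
  have "DeltaQ q e = DeltaQ q e' \<longleftrightarrow> DeltaQ q e = UU q e ?k \<and> UU q e ?k = SS q e' ?k \<and> SS q e' ?k = DeltaQ q e'"
    using l1 mid l3 by linarith
  also have "\<dots> \<longleftrightarrow> e' (Suc j) = Suc (e (Suc j)) \<and> (\<forall>n>Suc j. e n = m n) \<and> (\<forall>n>Suc j. e' n = 0)"
    using Delta_eq_UU[OF g de, of ?k] Delta_eq_SS[OF g de', of ?k] mideq by metis
  finally show "DeltaQ q e = DeltaQ q e' \<longleftrightarrow> e' (Suc j) = Suc (e (Suc j)) \<and> (\<forall>n>Suc j. e n = m n) \<and> (\<forall>n>Suc j. e' n = 0)" .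
qed

lemma Delta_cong: assumes "\<And>n. n \<ge> 1 \<Longrightarrow> e n = e' n" shows "DeltaQ q e = DeltaQ q e'"
proof -
  have pc: "(\<Prod>l\<in>{1..k+1}. q (e l) l) = (\<Prod>l\<in>{1..k+1}. q (e' l) l)" for k
    by (rule prod.cong) (auto simp: assms)
  have "e 1 = e' 1" "\<And>k. e (k+2) = e' (k+2)" using assms by auto
  then show ?thesis unfolding DeltaQ_def pc by simp
qed

lemma compare_both:
  assumes g: "good m q" and gp: "good m p" and de: "digit_seq m e" and de': "digit_seq m e'"
    and agree: "\<And>n. 1 \<le> n \<Longrightarrow> n \<le> j \<Longrightarrow> e n = e' n"
    and lt: "e (Suc j) < e' (Suc j)"
  shows "DeltaQ q e = DeltaQ q e' \<longleftrightarrow> DeltaQ p e = DeltaQ p e'"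
  using compare(2)[OF g de de' agree lt] compare(2)[OF gp de de' agree lt] by simp

lemma transfer:
  assumes g: "good m q" and gp: "good m p" and de: "digit_seq m e" and de': "digit_seq m e'"
  shows "DeltaQ q e = DeltaQ q e' \<longleftrightarrow> DeltaQ p e = DeltaQ p e'"
proof (cases "\<forall>n\<ge>1. e n = e' n")
  case True
  then show ?thesis using Delta_cong[of e e'] by auto
next
  case False
  define k where "k = (LEAST n. n \<ge> 1 \<and> e n \<noteq> e' n)"
  have k: "k \<ge> 1 \<and> e k \<noteq> e' k" unfolding k_def using False by (metis (mono_tags, lifting) LeastI)
  have ag: "e n = e' n" if "1 \<le> n" "n < k" for n
    using not_less_Least[of n "\<lambda>n. n \<ge> 1 \<and> e n \<noteq> e' n"] that unfolding k_def by blast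
  obtain j where kj: "k = Suc j" using k by (cases k) auto
  have ag': "\<And>n. 1 \<le> n \<Longrightarrow> n \<le> j \<Longrightarrow> e n = e' n" using ag kj by auto
  show ?thesis
  proof (cases "e k < e' k")
    case True
    then show ?thesis using compare_both[OF g gp de de' ag'] kj by simp
  next
    case False
    then have "e' (Suc j) < e (Suc j)" using k kj by auto
    then show ?thesis using compare_both[OF g gp de' de, of j] ag' by (metis)
  qed
qed

definition dig :: "(nat \<Rightarrow> nat \<Rightarrow> real) \<Rightarrow> (nat \<Rightarrow> nat) \<Rightarrow> nat \<Rightarrow> real \<Rightarrow> nat" where
  "dig q m n y = Max {i. i \<le> m n \<and> acc q i n \<le> y}"

lemma dig_props:
  assumes g: "good m q" and n: "n \<ge> 1" and y: "0 \<le> y" "y \<le> 1"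
  shows "dig q m n y \<le> m n" "acc q (dig q m n y) n \<le> y" "y \<le> acc q (Suc (dig q m n y)) n"
proof -
  let ?S = "{i. i \<le> m n \<and> acc q i n \<le> y}"
  have fin: "finite ?S" by (rule finite_subset[of _ "{..m n}"]) auto
  have ne: "0 \<in> ?S" using y by simp
  have mem: "dig q m n y \<in> ?S" unfolding dig_def using Max_in[OF fin] ne by blast
  then show "dig q m n y \<le> m n" "acc q (dig q m n y) n \<le> y" by auto
  show "y \<le> acc q (Suc (dig q m n y)) n"
  proof (cases "dig q m n y < m n")
    case True
    have "Suc (dig q m n y) \<notin> ?S"
    proof
      assume "Suc (dig q m n y) \<in> ?S"
      then have "Suc (dig q m n y) \<le> dig q m n y" unfolding dig_def using Max_ge[OF fin] by blast
      then show False by simp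
    qed
    then show ?thesis using True by auto
  next
    case False
    then have "dig q m n y = m n" using mem by auto
    then show ?thesis using acc_top[OF g n] y by simp
  qed
qed

primrec rr :: "(nat \<Rightarrow> nat \<Rightarrow> real) \<Rightarrow> (nat \<Rightarrow> nat) \<Rightarrow> real \<Rightarrow> nat \<Rightarrow> real" where
  "rr q m x 0 = x"
| "rr q m x (Suc n) = (rr q m x n - acc q (dig q m (Suc n) (rr q m x n)) (Suc n)) / q (dig q m (Suc n) (rr q m x n)) (Suc n)"

definition ee :: "(nat \<Rightarrow> nat \<Rightarrow> real) \<Rightarrow> (nat \<Rightarrow> nat) \<Rightarrow> real \<Rightarrow> nat \<Rightarrow> nat" where
  "ee q m x n = (if n = 0 then 0 else dig q m n (rr q m x (n - 1)))"

lemma ee_Suc: "ee q m x (Suc n) = dig q m (Suc n) (rr q m x n)" by (simp add: ee_def)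

lemma rr_01: assumes g: "good m q" and x: "0 \<le> x" "x \<le> 1" shows "0 \<le> rr q m x n \<and> rr q m x n \<le> 1"
proof (induction n)
  case 0 then show ?case using x by simp
next
  case (Suc n)
  let ?y = "rr q m x n" let ?i = "dig q m (Suc n) ?y"
  have p: "?i \<le> m (Suc n)" "acc q ?i (Suc n) \<le> ?y" "?y \<le> acc q (Suc ?i) (Suc n)"
    using dig_props[OF g, of "Suc n" ?y] Suc by auto
  have qp: "q ?i (Suc n) > 0" using good_pos[OF g, of "Suc n" ?i] p by simp
  have "?y - acc q ?i (Suc n) \<le> q ?i (Suc n)" using p(3) by (simp add: acc_Suc)
  then show ?case using p qp by (simp add: divide_le_eq_1)
qed

lemma ee_digit: assumes g: "good m q" and x: "0 \<le> x" "x \<le> 1" shows "digit_seq m (ee q m x)"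
  unfolding digit_seq_def
proof (intro allI impI)
  fix n :: nat assume "n \<ge> 1"
  then obtain k where "n = Suc k" by (cases n) auto
  then show "ee q m x n \<le> m n" using dig_props(1)[OF g, of n "rr q m x k"] rr_01[OF g x, of k]
    by (simp add: ee_Suc)
qed

lemma rr_ident: assumes g: "good m q" and x: "0 \<le> x" "x \<le> 1"
  shows "x = SS q (ee q m x) N + pi q (ee q m x) N * rr q m x N"
proof (induction N)
  case 0 then show ?case by (simp add: SS_def)
next
  case (Suc N)
  let ?e = "ee q m x"
  let ?y = "rr q m x N" let ?i = "dig q m (Suc N) ?y"
  have p: "?i \<le> m (Suc N)" using dig_props[OF g, of "Suc N" ?y] rr_01[OF g x, of N] by auto
  have qp: "q ?i (Suc N) > 0" using good_pos[OF g, of "Suc N" ?i] p by simp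
  have "SS q ?e (Suc N) + pi q ?e (Suc N) * rr q m x (Suc N)
      = SS q ?e N + acc q ?i (Suc N) * pi q ?e N + pi q ?e N * q ?i (Suc N) * ((?y - acc q ?i (Suc N)) / q ?i (Suc N))"
    by (simp add: SS_def tt_def pi_Suc ee_Suc)
  also have "\<dots> = SS q ?e N + pi q ?e N * ?y" using qp by (simp add: field_simps)
  finally show ?case using Suc by simp
qed

lemma surj_Delta: assumes g: "good m q" and x: "0 \<le> x" "x \<le> 1"
  shows "\<exists>e. digit_seq m e \<and> DeltaQ q e = x"
proof (intro exI conjI)
  let ?e = "ee q m x"
  have de: "digit_seq m ?e" by (rule ee_digit[OF g x])
  show "digit_seq m ?e" by (rule de)
  have z: "(\<lambda>N. pi q ?e N * rr q m x N) \<longlonglongrightarrow> 0"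
  proof (rule tendsto_sandwich[of "\<lambda>_. 0" _ sequentially "pi q ?e"])
    show "\<forall>\<^sub>F n in sequentially. 0 \<le> pi q ?e n * rr q m x n"
      using pi_pos[OF g de] rr_01[OF g x] by (auto intro!: always_eventually less_imp_le[THEN mult_nonneg_nonneg])
    show "\<forall>\<^sub>F n in sequentially. pi q ?e n * rr q m x n \<le> pi q ?e n"
      using pi_pos[OF g de] rr_01[OF g x] by (auto intro!: always_eventually mult_left_le)
  qed (auto intro: pi_lim[OF g de])
  have "(\<lambda>N. x - pi q ?e N * rr q m x N) \<longlonglongrightarrow> x - 0" by (intro tendsto_intros z)
  moreover have "(\<lambda>N. x - pi q ?e N * rr q m x N) = SS q ?e"
    using rr_ident[OF g x] by (auto simp: algebra_simps)
  ultimately have "SS q ?e \<longlonglongrightarrow> x" by simp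
  then show "DeltaQ q ?e = x" using SS_lim[OF g de] LIMSEQ_unique by blast
qed

lemma good_Q: "Q_matrix m q \<Longrightarrow> good m q"
  unfolding Q_matrix_def good_def by blast

lemma good_P: assumes "P_matrix m p" "\<forall>n\<ge>1. \<forall>i\<le>m n. p i n > 0" shows "good m p"
proof -
  have A: "\<forall>n\<ge>1. (\<forall>i\<le>m n. p i n > 0) \<and> (\<Sum>i\<le>m n. p i n) = 1" using assms unfolding P_matrix_def by blast
  have B: "(\<lambda>N. \<Prod>n\<in>{1..N}. p (d n) n) \<longlonglongrightarrow> 0" if d: "digit_seq m d" for d
  proof -
    have "(\<lambda>N. \<Prod>n\<in>{1..N}. \<bar>p (d n) n\<bar>) \<longlonglongrightarrow> 0" using assms(1) d unfolding P_matrix_def by blast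
    moreover have "(\<lambda>N. \<Prod>n\<in>{1..N}. \<bar>p (d n) n\<bar>) = (\<lambda>N. \<Prod>n\<in>{1..N}. p (d n) n)"
    proof
      fix N show "(\<Prod>n\<in>{1..N}. \<bar>p (d n) n\<bar>) = (\<Prod>n\<in>{1..N}. p (d n) n)"
        by (rule prod.cong) (use assms(2) d in \<open>auto simp: digit_seq_def less_imp_le\<close>)
    qed
    ultimately show ?thesis by simp
  qed
  show ?thesis unfolding good_def using A B by blast
qed

lemma F_value_eq: "F_value m p d = DeltaQ p (nega_digits m d)"
proof -
  have b: "beta_tilde m p (d k) k = acc p (nega_digits m d k) k" for k
    by (simp add: beta_tilde_def nega_digits_def)
  have pt: "p_tilde m p (d k) k = p (nega_digits m d k) k" for k
    by (simp add: p_tilde_def nega_digits_def)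
  have one: "nega_digits m d 1 = d 1" by (simp add: nega_digits_def)
  show ?thesis unfolding F_value_def DeltaQ_def b pt one ..
qed

lemma nega_digit: "digit_seq m d \<Longrightarrow> digit_seq m (nega_digits m d)"
  by (auto simp: digit_seq_def nega_digits_def)

lemma nega_nega: "digit_seq m d \<Longrightarrow> n \<ge> 1 \<Longrightarrow> nega_digits m (nega_digits m d) n = d n"
  by (auto simp: digit_seq_def nega_digits_def)

lemma F_at:
  assumes g: "good m q" and gp: "good m p" and de: "digit_seq m e"
  shows "F_fun m q p (DeltaQ q e) = DeltaQ p e"
proof -
  let ?P = "\<lambda>y. \<exists>d. digit_seq m d \<and> DeltaQ q e = NegaDelta m q d \<and> y = F_value m p d"
  have ex: "?P (DeltaQ p e)"
  proof (intro exI conjI)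
    show "digit_seq m (nega_digits m e)" by (rule nega_digit[OF de])
    show "DeltaQ q e = NegaDelta m q (nega_digits m e)"
      unfolding NegaDelta_def by (rule Delta_cong) (simp add: nega_nega[OF de])
    show "DeltaQ p e = F_value m p (nega_digits m e)"
      unfolding F_value_eq by (rule Delta_cong) (simp add: nega_nega[OF de])
  qed
  have "?P (F_fun m q p (DeltaQ q e))" unfolding F_fun_def by (rule someI[of ?P, OF ex])
  then obtain d where d: "digit_seq m d" "DeltaQ q e = DeltaQ q (nega_digits m d)"
    "F_fun m q p (DeltaQ q e) = DeltaQ p (nega_digits m d)"
    unfolding NegaDelta_def F_value_eq by blast
  have "DeltaQ p e = DeltaQ p (nega_digits m d)"
    using transfer[OF g gp de nega_digit[OF d(1)]] d(2) by simp
  then show ?thesis using d(3) by simp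
qed

theorem mainTheorem6:
  fixes m :: "nat \<Rightarrow> nat" and q p :: "nat \<Rightarrow> nat \<Rightarrow> real"
  assumes "Q_matrix m q"
    and "P_matrix m p"
    and "\<forall>n\<ge>1. \<forall>i\<le>m n. p i n > 0"
  shows "bij_betw (F_fun m q p) {0..1} {0..1}"
proof -
  have g: "good m q" by (rule good_Q[OF assms(1)])
  have gp: "good m p" by (rule good_P[OF assms(2,3)])
  have rep: "\<exists>e. digit_seq m e \<and> DeltaQ q e = x" if "x \<in> {0..1::real}" for x
    using surj_Delta[OF g, of x] that by auto
  show ?thesis unfolding bij_betw_def
  proof (intro conjI)
    show "inj_on (F_fun m q p) {0..1}"
    proof (rule inj_onI)
      fix x y assume x: "x \<in> {0..1::real}" and y: "y \<in> {0..1::real}" and eq: "F_fun m q p x = F_fun m q p y"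
      obtain e where e: "digit_seq m e" "DeltaQ q e = x" using rep[OF x] by blast
      obtain e' where e': "digit_seq m e'" "DeltaQ q e' = y" using rep[OF y] by blast
      have "DeltaQ p e = DeltaQ p e'" using eq F_at[OF g gp e(1)] F_at[OF g gp e'(1)] e e' by simp
      then show "x = y" using transfer[OF g gp e(1) e'(1)] e e' by simp
    qed
    show "F_fun m q p ` {0..1} = {0..1}"
    proof
      show "F_fun m q p ` {0..1} \<subseteq> {0..1}"
      proof
        fix z assume "z \<in> F_fun m q p ` {0..1}"
        then obtain x where x: "x \<in> {0..1}" "z = F_fun m q p x" by blast
        obtain e where e: "digit_seq m e" "DeltaQ q e = x" using rep[OF x(1)] by blast
        have "z = DeltaQ p e" using x(2) F_at[OF g gp e(1)] e(2) by simp
        then show "z \<in> {0..1}" using Delta_01[OF gp e(1)] by simp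
      qed
      show "{0..1} \<subseteq> F_fun m q p ` {0..1}"
      proof
        fix z :: real assume z: "z \<in> {0..1}"
        obtain e where e: "digit_seq m e" "DeltaQ p e = z" using surj_Delta[OF gp, of z] z by auto
        have "DeltaQ q e \<in> {0..1}" using Delta_01[OF g e(1)] by simp
        moreover have "F_fun m q p (DeltaQ q e) = z" using F_at[OF g gp e(1)] e(2) by simp
        ultimately show "z \<in> F_fun m q p ` {0..1}" by force
      qed
    qed
  qed
qed

end
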